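(* Let $m\ge1$, $n\ge0$, $d=m-n$, and let $\lambda$ be a partition with $\lambda_1+d-1\ge0$. Put $\hat x=(x_2,\dots,x_m)$ and $\hat\lambda=(\lambda_2,\lambda_3,\dots)$. Then $$\Big\{SP_\lambda(x,y)\,x^{\rho_m}y^{\rho_n}\Big\}=\Big\{\prod_{j=1}^n(x_1-y_j)\,x_1^{\lambda_1+d-1}\,SP_{\hat\lambda}(\hat x,y)\,x_2^{m-2}x_3^{m-3}\cdots x_m^{0}\,y^{\rho_n}\Big\}.$$
   Context: For a function $f(x,y)$ of $x=(x_1,\dots,x_m)$ and $y=(y_1,\dots,y_n)$, define $\{f\}=\sum_{w\in S_m\times S_n}\varepsilon(w)\,w(f)$. Here $S_m$ permutes the $x_i$, $S_n$ permutes the $y_j$, and $\varepsilon$ is the sign character. Set $x^{\rho_m}=x_1^{m-1}x_2^{m-2}\cdots x_m^0$ and $y^{\rho_n}=y_1^{n-1}\cdots y_n^0$. For a partition $\mu$ and any finite lists of variables $x,y$, the super Schur polynomial is defined by the Jacobi–Trudy formula $SP_\mu(x,y)=\det(h_{\mu_r-r+s}(x,y))_{r,s=1}^{l(\mu)}$, with $SP_\emptyset=1$. The $h_a(x,y)$ are given by $\prod_j(1-ty_j)/\prod_i(1-tx_i)=\sum_{a\ge0}h_a(x,y)t^a$, and $h_a=0$ for $a<0$. Here $l(\mu)$ is the number of nonzero parts of $\mu$. *)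

theory Defs
  imports "HOL-Computational_Algebra.Formal_Power_Series"
          "HOL-Combinatorics.Permutations"
          "Jordan_Normal_Form.Determinant"
begin

text \<open>Variables x = (x_1,...,x_m) are modelled as a function x :: nat => 'a, where
  x_{i+1} is x i for i < m (0-based).
  Polynomial identities are stated as identities of evaluations over an arbitrary field.\<close>

definition super_h :: "nat \<Rightarrow> nat \<Rightarrow> (nat \<Rightarrow> 'a::field) \<Rightarrow> nat \<Rightarrow> (nat \<Rightarrow> 'a) \<Rightarrow> 'a" where
  "super_h a m x n y =
     fps_nth ((\<Prod>j<n. 1 - fps_const (y j) * fps_X) *
              (\<Prod>i<m. inverse (1 - fps_const (x i) * fps_X))) a"

definition super_hz :: "int \<Rightarrow> nat \<Rightarrow> (nat \<Rightarrow> 'a::field) \<Rightarrow> nat \<Rightarrow> (nat \<Rightarrow> 'a) \<Rightarrow> 'a" where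
  "super_hz a m x n y = (if a < 0 then 0 else super_h (nat a) m x n y)"

text \<open>A partition is a weakly decreasing sequence of naturals with finitely many nonzero
  parts; mu_{r+1} is mu r (0-based).\<close>
definition is_partition :: "(nat \<Rightarrow> nat) \<Rightarrow> bool" where
  "is_partition mu \<longleftrightarrow> (\<forall>i. mu (Suc i) \<le> mu i) \<and> finite {i. mu i \<noteq> 0}"

definition part_length :: "(nat \<Rightarrow> nat) \<Rightarrow> nat" where
  "part_length mu = card {i. mu i \<noteq> 0}"

definition SP :: "(nat \<Rightarrow> nat) \<Rightarrow> nat \<Rightarrow> (nat \<Rightarrow> 'a::field) \<Rightarrow> nat \<Rightarrow> (nat \<Rightarrow> 'a) \<Rightarrow> 'a" where
  "SP mu m x n y =
     det (mat (part_length mu) (part_length mu)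
       (\<lambda>(r, s). super_hz (int (mu r) - int r + int s) m x n y))"

definition antisymmetrize ::
  "nat \<Rightarrow> nat \<Rightarrow> ((nat \<Rightarrow> 'a::field) \<Rightarrow> (nat \<Rightarrow> 'a) \<Rightarrow> 'a) \<Rightarrow> (nat \<Rightarrow> 'a) \<Rightarrow> (nat \<Rightarrow> 'a) \<Rightarrow> 'a" where
  "antisymmetrize m n f x y =
     (\<Sum>p\<in>{p. p permutes {..<m}}. \<Sum>q\<in>{q. q permutes {..<n}}.
        of_int (sign p * sign q) * f (x \<circ> p) (y \<circ> q))"

end

theory Submission
  imports Defs
begin

definition EP :: "(nat \<Rightarrow> 'a::field) \<Rightarrow> nat \<Rightarrow> 'a fps" where
  "EP y n = (\<Prod>j<n. 1 - fps_const (y j) * fps_X)"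
definition HP :: "(nat \<Rightarrow> 'a::field) \<Rightarrow> nat \<Rightarrow> 'a fps" where
  "HP x m = (\<Prod>i<m. inverse (1 - fps_const (x i) * fps_X))"

lemma super_h_EP: "super_h a m x n y = fps_nth (EP y n * HP x m) a"
  by (simp add: super_h_def EP_def HP_def)

lemma EP_Suc: "EP y (Suc n) = EP y n * (1 - fps_const (y n) * fps_X)"
  by (simp add: EP_def)

lemma EP_Suc_nth: "fps_nth (EP y (Suc n)) k = fps_nth (EP y n) k - (if k = 0 then 0 else y n * fps_nth (EP y n) (k - 1))"
proof -
  have "EP y (Suc n) = EP y n - fps_X * (fps_const (y n) * EP y n)"
    by (simp add: EP_Suc algebra_simps)
  then show ?thesis by simp
qed

lemma EP_nth_0[simp]: "fps_nth (EP y n) 0 = 1"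
  by (induction n) (simp_all add: EP_def[symmetric] EP_Suc_nth, simp add: EP_def)

lemma EP_nth_big: "k > n \<Longrightarrow> fps_nth (EP y n) k = 0"
proof (induction n arbitrary: k)
  case 0 then show ?case by (simp add: EP_def)
next
  case (Suc n) then show ?case by (simp add: EP_Suc_nth)
qed

lemma EP_poly: "(\<Prod>j<n. (t - y j)) = (\<Sum>i\<le>n. fps_nth (EP y n) i * t ^ (n - i))"
proof (induction n)
  case 0 then show ?case by (simp add: EP_def)
next
  case (Suc n)
  have "(\<Prod>j<Suc n. (t - y j)) = (\<Sum>i\<le>n. fps_nth (EP y n) i * t ^ (n - i)) * (t - y n)"
    using Suc by simp
  also have "\<dots> = (\<Sum>i\<le>n. fps_nth (EP y n) i * t ^ (Suc n - i)) - (\<Sum>i\<le>n. y n * fps_nth (EP y n) i * t ^ (n - i))"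
    by (simp add: algebra_simps sum_distrib_left sum_distrib_right sum_subtractf Suc_diff_le
        power_Suc)
  also have "(\<Sum>i\<le>n. fps_nth (EP y n) i * t ^ (Suc n - i)) = (\<Sum>i\<le>Suc n. fps_nth (EP y n) i * t ^ (Suc n - i))"
    by (simp add: EP_nth_big)
  also have "(\<Sum>i\<le>n. y n * fps_nth (EP y n) i * t ^ (n - i)) = (\<Sum>i\<le>Suc n. (if i = 0 then 0 else y n * fps_nth (EP y n) (i - 1)) * t ^ (Suc n - i))"
    by (subst sum.atMost_Suc_shift) simp
  finally have calc: "(\<Prod>j<Suc n. (t - y j)) = (\<Sum>i\<le>Suc n. fps_nth (EP y n) i * t ^ (Suc n - i)) - (\<Sum>i\<le>Suc n. (if i = 0 then 0 else y n * fps_nth (EP y n) (i - 1)) * t ^ (Suc n - i))" .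
  have eq: "(\<Sum>i\<le>Suc n. fps_nth (EP y (Suc n)) i * t ^ (Suc n - i)) = (\<Sum>i\<le>Suc n. fps_nth (EP y n) i * t ^ (Suc n - i)) - (\<Sum>i\<le>Suc n. (if i = 0 then 0 else y n * fps_nth (EP y n) (i - 1)) * t ^ (Suc n - i))"
    by (simp only: EP_Suc_nth left_diff_distrib sum_subtractf)
  show ?case by (rule trans[OF calc eq[symmetric]])
qed


definition hx :: "int \<Rightarrow> (nat \<Rightarrow> 'a::field) \<Rightarrow> nat \<Rightarrow> 'a" where
  "hx b x m = (if b < 0 then 0 else fps_nth (HP x m) (nat b))"

lemma conv_lemma:
  fixes f g :: "'a::field fps"
  assumes "\<And>i. i > n \<Longrightarrow> fps_nth f i = 0" "0 \<le> a"
  shows "fps_nth (f*g) (nat a) = (\<Sum>i\<le>n. fps_nth f i * (if a - int i < 0 then 0 else fps_nth g (nat (a - int i))))"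
proof -
  let ?t = "\<lambda>i. fps_nth f i * (if a - int i < 0 then 0 else fps_nth g (nat (a - int i)))"
  have "fps_nth (f*g) (nat a) = (\<Sum>i=0..nat a. ?t i)"
    unfolding fps_mult_nth using assms(2)
    by (intro sum.cong) (auto simp: nat_diff_distrib)
  also have "\<dots> = (\<Sum>i\<in>{0..nat a} \<union> {..n}. ?t i)"
    by (rule sum.mono_neutral_left) (use assms in \<open>auto simp: not_le\<close>)
  also have "\<dots> = (\<Sum>i\<le>n. ?t i)"
    by (rule sum.mono_neutral_right) (use assms in \<open>auto simp: not_le\<close>)
  finally show ?thesis .
qed

lemma super_hz_conv:
  "super_hz a m x n y = (\<Sum>i\<le>n. fps_nth (EP y n) i * hx (a - int i) x m)"
proof (cases "a < 0")
  case True then show ?thesis by (simp add: super_hz_def hx_def)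
next
  case False
  then show ?thesis
    unfolding super_hz_def super_h_EP hx_def
    using conv_lemma[of n "EP y n" a "HP x m"] EP_nth_big[of n _ y] by simp
qed

lemma EP_HP: "EP x m * HP x m = 1"
proof (induction m)
  case 0 then show ?case by (simp add: EP_def HP_def)
next
  case (Suc m)
  have "EP x (Suc m) * HP x (Suc m) = (EP x m * HP x m) * ((1 - fps_const (x m) * fps_X) * inverse (1 - fps_const (x m) * fps_X))"
    by (simp add: EP_def HP_def algebra_simps)
  also have "(1 - fps_const (x m) * fps_X) * inverse (1 - fps_const (x m) * fps_X) = 1"
    by (rule inverse_mult_eq_1') simp
  finally show ?case using Suc by simp
qed

lemma hx_rec:
  assumes "k \<ge> 1"
  shows "(\<Sum>j\<le>m. fps_nth (EP x m) j * hx (k - int j) x m) = 0"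
proof -
  have "fps_nth (EP x m * HP x m) (nat k) = 0" using assms by (simp add: EP_HP)
  then show ?thesis
    unfolding hx_def using conv_lemma[of m "EP x m" k "HP x m"] EP_nth_big[of m _ x] assms by simp
qed

lemma HP_nth_0[simp]: "fps_nth (HP x m) 0 = 1"
  by (induction m) (simp_all add: HP_def)

lemma hx_0[simp]: "hx 0 x m = 1" by (simp add: hx_def)

lemma EP_perm: "q permutes {..<n} \<Longrightarrow> EP (y \<circ> q) n = EP y n"
  unfolding EP_def by (subst prod.permute[of q "{..<n}"]) (simp_all add: o_def)
lemma HP_perm: "q permutes {..<n} \<Longrightarrow> HP (y \<circ> q) n = HP y n"
  unfolding HP_def by (subst prod.permute[of q "{..<n}"]) (simp_all add: o_def)

lemma super_hz_perm:
  "p permutes {..<m} \<Longrightarrow> q permutes {..<n} \<Longrightarrow> super_hz a m (x \<circ> p) n (y \<circ> q) = super_hz a m x n y"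
  by (simp add: super_hz_def super_h_EP EP_perm HP_perm)

lemma HP_shift: "HP x (Suc k) = inverse (1 - fps_const (x 0) * fps_X) * HP (\<lambda>i. x (Suc i)) k"
  unfolding HP_def by (subst prod.lessThan_Suc_shift) simp

lemma super_hz_shift:
  assumes "m \<ge> 1"
  shows "super_hz a (m - 1) (\<lambda>i. x (Suc i)) n y = super_hz a m x n y - x 0 * super_hz (a - 1) m x n y"
proof -
  obtain k where m: "m = Suc k" using assms by (cases m) auto
  let ?F = "EP y n * HP x m"
  have "EP y n * HP (\<lambda>i. x (Suc i)) k = (EP y n * HP (\<lambda>i. x (Suc i)) k) * (inverse (1 - fps_const (x 0) * fps_X) * (1 - fps_const (x 0) * fps_X))"
  proof -
    have "inverse (1 - fps_const (x 0) * fps_X) * (1 - fps_const (x 0) * fps_X) = 1"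
      by (rule inverse_mult_eq_1) simp
    then show ?thesis by simp
  qed
  also have "\<dots> = (1 - fps_const (x 0) * fps_X) * ?F"
    by (simp add: m HP_shift algebra_simps)
  also have "\<dots> = ?F - fps_X * (fps_const (x 0) * ?F)" by (simp add: algebra_simps)
  finally have eq: "EP y n * HP (\<lambda>i. x (Suc i)) k = ?F - fps_X * (fps_const (x 0) * ?F)" .
  show ?thesis
    unfolding super_hz_def super_h_EP m
    by (simp add: eq[unfolded m] nat_diff_distrib')
qed


definition altN :: "nat \<Rightarrow> (nat \<Rightarrow> 'a::field) \<Rightarrow> nat \<Rightarrow> 'a" where
  "altN N x m = (\<Sum>p\<in>{p. p permutes {..<m}}. of_int (sign p) * (x (p 0) ^ N * (\<Prod>i\<in>{1..<m}. x (p i) ^ (m - 1 - i))))"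

definition altR :: "(nat \<Rightarrow> 'a::field) \<Rightarrow> nat \<Rightarrow> 'a" where
  "altR x m = (\<Sum>p\<in>{p. p permutes {..<m}}. of_int (sign p) * (\<Prod>i<m. x (p i) ^ (m - 1 - i)))"

lemma prod_split0: "(m::nat) \<ge> 1 \<Longrightarrow> (\<Prod>i<m. f i) = f 0 * (\<Prod>i\<in>{1..<m}. f i)"
proof -
  assume "m \<ge> 1"
  then have "{..<m} = insert 0 {1..<m}" by (auto simp: not_le)
  then show ?thesis by simp
qed

lemma altN_R: "m \<ge> 1 \<Longrightarrow> altN (m - 1) x m = altR x m"
  unfolding altN_def altR_def by (intro sum.cong refl) (simp add: prod_split0)

lemma altN_zero:
  assumes "m \<ge> 1" "N < m - 1"
  shows "altN N x m = (0::'a::field)"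
proof -
  define A where "A = mat m m (\<lambda>(r,s). x s ^ (if r = 0 then N else m - 1 - r))"
  have A: "A \<in> carrier_mat m m" by (simp add: A_def)
  have "det A = (\<Sum>p\<in>{p. p permutes {0..<m}}. signof p * (\<Prod>i=0..<m. A $$ (i, p i)))"
    by (rule det_def'[OF A])
  also have "\<dots> = altN N x m"
    unfolding altN_def lessThan_atLeast0[symmetric]
  proof (intro sum.cong refl)
    fix p assume p: "p \<in> {p. p permutes {..<m}}"
    have "(\<Prod>i<m. A $$ (i, p i)) = (\<Prod>i<m. x (p i) ^ (if i = 0 then N else m - 1 - i))"
      using p permutes_in_image[of p "{..<m}"] by (intro prod.cong refl) (auto simp: A_def)
    also have "\<dots> = x (p 0) ^ N * (\<Prod>i\<in>{1..<m}. x (p i) ^ (m - 1 - i))"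
      using assms(1) by (subst prod_split0) (auto intro!: prod.cong)
    finally show "signof p * (\<Prod>i<m. A $$ (i, p i)) = of_int (sign p) * (x (p 0) ^ N * (\<Prod>i\<in>{1..<m}. x (p i) ^ (m - 1 - i)))"
      by simp
  qed
  finally have eq: "det A = altN N x m" .
  have "det A = 0"
  proof (rule det_identical_rows[OF A, of 0 "m - 1 - N"])
    show "row A 0 = row A (m - 1 - N)"
      using assms by (intro eq_vecI) (auto simp: A_def)
  qed (use assms in auto)
  with eq show ?thesis by simp
qed

lemma pow_rec:
  assumes "k < m" "M \<ge> m"
  shows "x k ^ M = - (\<Sum>j\<in>{1..m}. fps_nth (EP x m) j * x k ^ (M - j))"
proof -
  have "(\<Prod>j<m. (x k - x j)) = 0" using assms by (intro prod_zero) auto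
  then have "(\<Sum>j\<le>m. fps_nth (EP x m) j * x k ^ (m - j)) = 0" by (simp add: EP_poly)
  then have "(\<Sum>j\<le>m. fps_nth (EP x m) j * x k ^ (m - j)) * x k ^ (M - m) = 0" by simp
  then have "(\<Sum>j\<le>m. fps_nth (EP x m) j * x k ^ (M - j)) = 0"
    unfolding sum_distrib_right
  proof -
    have "(\<Sum>j\<le>m. fps_nth (EP x m) j * x k ^ (m - j)) * x k ^ (M - m) = (\<Sum>j\<le>m. fps_nth (EP x m) j * x k ^ (M - j))"
      unfolding sum_distrib_right
    proof (intro sum.cong refl)
      fix j assume "j \<in> {..m}"
      then have e: "m - j + (M - m) = M - j" using assms by auto
      show "fps_nth (EP x m) j * x k ^ (m - j) * x k ^ (M - m) = fps_nth (EP x m) j * x k ^ (M - j)"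
        by (simp only: mult.assoc power_add[symmetric] e)
    qed
    then show ?thesis using \<open>(\<Sum>j\<le>m. fps_nth (EP x m) j * x k ^ (m - j)) * x k ^ (M - m) = 0\<close> by simp
  qed
  moreover have "{..m} = insert 0 {1..m}" by auto
  ultimately show ?thesis by (simp add: eq_neg_iff_add_eq_0 add.commute)
qed

lemma altN_rec:
  assumes "M \<ge> m" "m \<ge> 1"
  shows "altN M x m = - (\<Sum>j\<in>{1..m}. fps_nth (EP x m) j * altN (M - j) x m)"
proof -
  have "altN M x m = (\<Sum>p\<in>{p. p permutes {..<m}}. of_int (sign p) * ((- (\<Sum>j\<in>{1..m}. fps_nth (EP x m) j * x (p 0) ^ (M - j))) * (\<Prod>i\<in>{1..<m}. x (p i) ^ (m - 1 - i))))"
    unfolding altN_def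
  proof (intro sum.cong refl)
    fix p assume p: "p \<in> {p. p permutes {..<m}}"
    have "p 0 < m" using assms p permutes_in_image[of p "{..<m}" 0] by auto
    then show "of_int (sign p) * (x (p 0) ^ M * (\<Prod>i\<in>{1..<m}. x (p i) ^ (m - 1 - i))) =
      of_int (sign p) * ((- (\<Sum>j\<in>{1..m}. fps_nth (EP x m) j * x (p 0) ^ (M - j))) * (\<Prod>i\<in>{1..<m}. x (p i) ^ (m - 1 - i)))"
      using pow_rec[of "p 0" m M x] assms by simp
  qed
  also have "\<dots> = - (\<Sum>j\<in>{1..m}. fps_nth (EP x m) j * altN (M - j) x m)"
  proof -
    let ?e = "\<lambda>j. fps_nth (EP x m) j"
    let ?R = "\<lambda>p. (\<Prod>i\<in>{1..<m}. x (p i) ^ (m - 1 - i))"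
    have "(\<Sum>p\<in>{p. p permutes {..<m}}. of_int (sign p) * ((- (\<Sum>j\<in>{1..m}. ?e j * x (p 0) ^ (M - j))) * ?R p))
      = (\<Sum>p\<in>{p. p permutes {..<m}}. - (\<Sum>j\<in>{1..m}. ?e j * (of_int (sign p) * (x (p 0) ^ (M - j) * ?R p))))"
      by (intro sum.cong refl) (simp add: sum_distrib_left sum_distrib_right algebra_simps)
    also have "\<dots> = - (\<Sum>j\<in>{1..m}. (\<Sum>p\<in>{p. p permutes {..<m}}. ?e j * (of_int (sign p) * (x (p 0) ^ (M - j) * ?R p))))"
      by (simp only: sum_negf sum.swap[of _ "{p. p permutes {..<m}}"])
    also have "\<dots> = - (\<Sum>j\<in>{1..m}. ?e j * altN (M - j) x m)"
      unfolding altN_def by (simp only: sum_distrib_left)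
    finally show ?thesis .
  qed
  finally show ?thesis .
qed


lemma altN_closed:
  assumes "m \<ge> 1"
  shows "altN N x m = hx (int N - int m + 1) x m * altR x m"
proof (induction N rule: less_induct)
  case (less N)
  consider "N < m - 1" | "N = m - 1" | "N \<ge> m" by linarith
  then show ?case
  proof cases
    case 1 then show ?thesis using assms altN_zero[of m N x] by (simp add: hx_def)
  next
    case 2 then show ?thesis using assms altN_R[of m x] by simp
  next
    case 3
    let ?e = "\<lambda>j. fps_nth (EP x m) j"
    have r: "altN N x m = - (\<Sum>j\<in>{1..m}. ?e j * altN (N - j) x m)"
      using altN_rec[OF 3 assms] .
    have s: "(\<Sum>j\<in>{1..m}. ?e j * altN (N - j) x m) = (\<Sum>j\<in>{1..m}. ?e j * hx (int N - int m + 1 - int j) x m) * altR x m"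
      unfolding sum_distrib_right
    proof (intro sum.cong refl)
      fix j assume j: "j \<in> {1..m}"
      then have "N - j < N" "int (N - j) = int N - int j" using 3 assms by auto
      then show "?e j * altN (N - j) x m = ?e j * hx (int N - int m + 1 - int j) x m * altR x m"
        using less by (simp add: algebra_simps)
    qed
    have "- (\<Sum>j\<in>{1..m}. ?e j * altN (N - j) x m) = (- (\<Sum>j\<in>{1..m}. ?e j * hx (int N - int m + 1 - int j) x m)) * altR x m"
      using s by simp
    moreover have "- (\<Sum>j\<in>{1..m}. ?e j * hx (int N - int m + 1 - int j) x m) = hx (int N - int m + 1) x m"
    proof -
      have "(\<Sum>j\<le>m. ?e j * hx (int N - int m + 1 - int j) x m) = 0"
        using hx_rec[where k="int N - int m + 1" and m=m and x=x] 3 by simp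
      moreover have "(\<Sum>j\<le>m. ?e j * hx (int N - int m + 1 - int j) x m) = ?e 0 * hx (int N - int m + 1 - int 0) x m + (\<Sum>j\<in>{1..m}. ?e j * hx (int N - int m + 1 - int j) x m)"
      proof -
        have "{..m} = insert 0 {1..m}" by auto
        then show ?thesis by simp
      qed
      ultimately have "hx (int N - int m + 1) x m + (\<Sum>j\<in>{1..m}. ?e j * hx (int N - int m + 1 - int j) x m) = 0"
        by simp
      then show ?thesis by (metis add.commute neg_eq_iff_add_eq_0)
    qed
    ultimately show ?thesis using r s by (metis mult_minus_left)
  qed
qed

lemma G_lemma:
  fixes x y :: "nat \<Rightarrow> 'a::field"
  assumes "m \<ge> 1"
  shows "antisymmetrize m n (\<lambda>x y. (\<Prod>j<n. (x 0 - y j)) * x 0 ^ N * (\<Prod>i\<in>{1..<m}. x i ^ (m - 1 - i)) * (\<Prod>j<n. y j ^ (n - 1 - j))) x y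
     = super_hz (int N + int n - int m + 1) m x n y * altR x m * altR y n"
proof -
  let ?P = "{p. p permutes {..<m}}" and ?Q = "{q. q permutes {..<n}}"
  let ?e = "\<lambda>i. fps_nth (EP y n) i"
  let ?X = "\<lambda>(p::nat\<Rightarrow>nat) k. of_int (sign p) * (x (p 0) ^ k * (\<Prod>i\<in>{1..<m}. x (p i) ^ (m - 1 - i)))"
  let ?Y = "\<lambda>(q::nat\<Rightarrow>nat). of_int (sign q) * (\<Prod>j<n. y (q j) ^ (n - 1 - j))"
  have "antisymmetrize m n (\<lambda>x y. (\<Prod>j<n. (x 0 - y j)) * x 0 ^ N * (\<Prod>i\<in>{1..<m}. x i ^ (m - 1 - i)) * (\<Prod>j<n. y j ^ (n - 1 - j))) x y
     = (\<Sum>p\<in>?P. \<Sum>q\<in>?Q. \<Sum>i\<le>n. ?e i * (?X p (N + (n - i)) * ?Y q))"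
    unfolding antisymmetrize_def
  proof (intro sum.cong refl)
    fix p q :: "nat \<Rightarrow> nat" assume q: "q \<in> ?Q"
    have "(\<Prod>j<n. (x (p 0) - y (q j))) = (\<Prod>j<n. (x (p 0) - y j))"
      using q by (subst prod.permute[of q "{..<n}" "\<lambda>j. x (p 0) - y j"]) (simp_all add: o_def)
    also have "\<dots> = (\<Sum>i\<le>n. ?e i * x (p 0) ^ (n - i))" by (rule EP_poly)
    finally have e: "(\<Prod>j<n. (x (p 0) - y (q j))) = (\<Sum>i\<le>n. ?e i * x (p 0) ^ (n - i))" .
    show "of_int (sign p * sign q) * ((\<Prod>j<n. ((x \<circ> p) 0 - (y \<circ> q) j)) * (x \<circ> p) 0 ^ N * (\<Prod>i\<in>{1..<m}. (x \<circ> p) i ^ (m - 1 - i)) * (\<Prod>j<n. (y \<circ> q) j ^ (n - 1 - j)))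
       = (\<Sum>i\<le>n. ?e i * (?X p (N + (n - i)) * ?Y q))"
      unfolding o_def e sum_distrib_right sum_distrib_left
      by (intro sum.cong refl) (simp only: power_add mult_ac of_int_mult)
  qed
  also have "\<dots> = (\<Sum>p\<in>?P. \<Sum>i\<le>n. \<Sum>q\<in>?Q. ?e i * (?X p (N + (n - i)) * ?Y q))"
    by (intro sum.cong refl) (rule sum.swap)
  also have "\<dots> = (\<Sum>i\<le>n. \<Sum>p\<in>?P. \<Sum>q\<in>?Q. ?e i * (?X p (N + (n - i)) * ?Y q))"
    by (rule sum.swap)
  also have "\<dots> = (\<Sum>i\<le>n. ?e i * (altN (N + (n - i)) x m * altR y n))"
    by (intro sum.cong refl) (simp only: altN_def altR_def sum_product, simp only: sum_distrib_left mult.assoc)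
  also have "\<dots> = (\<Sum>i\<le>n. ?e i * hx (int N + int n - int m + 1 - int i) x m) * altR x m * altR y n"
    unfolding sum_distrib_right
  proof (intro sum.cong refl)
    fix i assume "i \<in> {..n}"
    then have "int (N + (n - i)) = int N + int n - int i" by auto
    then show "?e i * (altN (N + (n - i)) x m * altR y n) = ?e i * hx (int N + int n - int m + 1 - int i) x m * altR x m * altR y n"
      using altN_closed[OF assms, of "N + (n - i)" x] by (simp add: algebra_simps)
  qed
  also have "\<dots> = super_hz (int N + int n - int m + 1) m x n y * altR x m * altR y n"
    by (simp add: super_hz_conv)
  finally show ?thesis .
qed


lemma partition_nonzero:
  assumes "is_partition lam"
  shows "{i. lam i \<noteq> 0} = {..<part_length lam}"
proof -
  let ?S = "{i. lam i \<noteq> 0}"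
  have fin: "finite ?S" using assms by (simp add: is_partition_def)
  have dec: "\<And>i j. j \<le> i \<Longrightarrow> lam i \<le> lam j"
    using assms unfolding is_partition_def by (metis lift_Suc_antimono_le)
  have down: "\<And>i j. j \<le> i \<Longrightarrow> i \<in> ?S \<Longrightarrow> j \<in> ?S"
    using dec by (metis (mono_tags) le_0_eq mem_Collect_eq)
  have A: "?S \<subseteq> {..<card ?S}"
  proof (rule subsetI)
    fix i assume i: "i \<in> ?S"
    have "{..i} \<subseteq> ?S" using down i by blast
    then have "card {..i} \<le> card ?S" using fin by (rule card_mono[rotated])
    then show "i \<in> {..<card ?S}" by simp
  qed
  have B: "{..<card ?S} \<subseteq> ?S"
  proof (rule subsetI)
    fix i assume i: "i \<in> {..<card ?S}"
    show "i \<in> ?S"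
    proof (rule ccontr)
      assume "i \<notin> ?S"
      then have "?S \<subseteq> {..<i}" using down by (metis lessThan_iff not_le subsetI)
      then have "card ?S \<le> card {..<i}" by (rule card_mono[rotated]) simp
      then show False using i by simp
    qed
  qed
  from A B show ?thesis unfolding part_length_def by (rule subset_antisym)
qed

lemma part_length_shift:
  assumes "is_partition lam"
  shows "part_length (\<lambda>i. lam (Suc i)) = part_length lam - 1"
proof -
  have "{i. lam (Suc i) \<noteq> 0} = {i. Suc i \<in> {i. lam i \<noteq> 0}}" by simp
  also have "\<dots> = {..<part_length lam - 1}" unfolding partition_nonzero[OF assms] by auto
  finally show ?thesis unfolding part_length_def[of "\<lambda>i. lam (Suc i)"] by simp
qed

definition JT :: "(nat \<Rightarrow> nat) \<Rightarrow> nat \<Rightarrow> (nat \<Rightarrow> 'a::field) \<Rightarrow> nat \<Rightarrow> (nat \<Rightarrow> 'a) \<Rightarrow> 'a mat" where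
  "JT lam m x n y = mat (part_length lam) (part_length lam)
       (\<lambda>(r, s). super_hz (int (lam r) - int r + int s) m x n y)"

lemma SP_JT: "SP lam m x n y = det (JT lam m x n y)"
  by (simp add: SP_def JT_def)

lemma SP_laplace:
  assumes "part_length lam \<ge> 1"
  shows "SP lam m x n y = (\<Sum>s<part_length lam. super_hz (int (lam 0) + int s) m x n y * cofactor (JT lam m x n y) 0 s)"
proof -
  have "SP lam m x n y = (\<Sum>s<part_length lam. JT lam m x n y $$ (0, s) * cofactor (JT lam m x n y) 0 s)"
    unfolding SP_JT by (rule laplace_expansion_row) (use assms in \<open>auto simp: JT_def\<close>)
  also have "\<dots> = (\<Sum>s<part_length lam. super_hz (int (lam 0) + int s) m x n y * cofactor (JT lam m x n y) 0 s)"
    using assms by (intro sum.cong refl) (simp add: JT_def)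
  finally show ?thesis .
qed

lemma SP_shift:
  assumes "part_length lam \<ge> 1" "m \<ge> 1" "is_partition lam"
  shows "SP (\<lambda>i. lam (Suc i)) (m - 1) (\<lambda>i. x (Suc i)) n y
       = (\<Sum>s<part_length lam. x 0 ^ s * cofactor (JT lam m x n y) 0 s)"
proof -
  define l where "l = part_length lam"
  obtain k where lk: "l = Suc k" using assms(1) unfolding l_def by (cases "part_length lam") auto
  define t where "t = x 0"
  define h where "h = (\<lambda>a. super_hz a m x n y)"
  define B where "B = JT lam m x n y"
  define C where "C = mat l l (\<lambda>(r, s). if r = 0 then t ^ s else h (int (lam r) - int r + int s))"
  define U where "U = mat l l (\<lambda>(r, s). if r = s then 1 else if Suc r = s then - t else 0)"
  have B: "B \<in> carrier_mat l l" by (simp add: B_def JT_def l_def)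
  have C: "C \<in> carrier_mat l l" by (simp add: C_def)
  have U: "U \<in> carrier_mat l l" by (simp add: U_def)
  have Bij: "\<And>i j. i < l \<Longrightarrow> j < l \<Longrightarrow> B $$ (i, j) = h (int (lam i) - int i + int j)"
    by (simp add: B_def JT_def l_def h_def)
  have delCB: "\<And>s. mat_delete C 0 s = mat_delete B 0 s"
    by (rule eq_matI) (use B C in \<open>auto simp: mat_delete_def C_def Bij\<close>)
  have detC: "det C = (\<Sum>s<l. t ^ s * cofactor B 0 s)"
  proof -
    have "det C = (\<Sum>s<l. C $$ (0, s) * cofactor C 0 s)"
      by (rule laplace_expansion_row[OF C]) (simp add: lk)
    also have "\<dots> = (\<Sum>s<l. t ^ s * cofactor B 0 s)"
      by (intro sum.cong refl) (simp add: cofactor_def delCB, simp add: C_def lk)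
    finally show ?thesis .
  qed
  have detU: "det U = 1"
  proof -
    have "upper_triangular U" by (auto simp: upper_triangular_def U_def)
    then have "det U = prod_list (diag_mat U)" by (rule det_upper_triangular[OF _ U])
    also have "diag_mat U = map (\<lambda>i. 1) [0..<l]"
      by (simp add: diag_mat_def U_def)
    finally show ?thesis by (simp add: map_replicate_const)
  qed
  define D where "D = C * U"
  have D: "D \<in> carrier_mat l l" using C U by (simp add: D_def)
  have Dij: "\<And>i j. i < l \<Longrightarrow> j < l \<Longrightarrow> D $$ (i, j) = (if j = 0 then C $$ (i, 0) else C $$ (i, j) - t * C $$ (i, j - 1))"
  proof -
    fix i j assume i: "i < l" and j: "j < l"
    have "D $$ (i, j) = (\<Sum>k<l. C $$ (i, k) * U $$ (k, j))"
      using C U i j by (simp add: D_def scalar_prod_def lessThan_atLeast0)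
    also have "\<dots> = (\<Sum>k<l. C $$ (i, k) * (if k = j then 1 else 0)) + (\<Sum>k<l. C $$ (i, k) * (if Suc k = j then - t else 0))"
      unfolding sum.distrib[symmetric]
      using j by (intro sum.cong refl) (auto simp: U_def)
    also have "(\<Sum>k<l. C $$ (i, k) * (if k = j then 1 else 0)) = C $$ (i, j)"
      using j by (simp add: if_distrib cong: if_cong)
    also have "(\<Sum>k<l. C $$ (i, k) * (if Suc k = j then - t else 0)) = (if j = 0 then 0 else - t * C $$ (i, j - 1))"
    proof (cases j)
      case 0 then show ?thesis by simp
    next
      case (Suc j')
      have "(\<Sum>k<l. C $$ (i, k) * (if Suc k = j then - t else 0)) = (\<Sum>k<l. if k = j' then C $$ (i, k) * - t else 0)"
        using Suc by (intro sum.cong refl) auto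
      also have "\<dots> = C $$ (i, j') * - t" using Suc j by simp
      finally show ?thesis using Suc by simp
    qed
    finally show "D $$ (i, j) = (if j = 0 then C $$ (i, 0) else C $$ (i, j) - t * C $$ (i, j - 1))"
      by (cases "j = 0") simp_all
  qed
  have detD: "det D = det C" using det_mult[OF C U] detU by (simp add: D_def)
  have detD2: "det D = det (mat_delete D 0 0)"
  proof -
    have "det D = (\<Sum>s<l. D $$ (0, s) * cofactor D 0 s)"
      by (rule laplace_expansion_row[OF D]) (simp add: lk)
    also have "\<dots> = (\<Sum>s<l. if s = 0 then cofactor D 0 0 else 0)"
      by (intro sum.cong refl) (auto simp: Dij lk C_def power_eq_if)
    also have "\<dots> = cofactor D 0 0" by (simp add: lk)
    finally show ?thesis by (simp add: cofactor_def)
  qed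
  have delD: "mat_delete D 0 0 = mat k k (\<lambda>(r, s). super_hz (int (lam (Suc r)) - int r + int s) (m - 1) (\<lambda>i. x (Suc i)) n y)"
  proof (rule eq_matI)
    fix i j assume i: "i < dim_row (mat k k (\<lambda>(r, s). super_hz (int (lam (Suc r)) - int r + int s) (m - 1) (\<lambda>i. x (Suc i)) n y))"
      and j: "j < dim_col (mat k k (\<lambda>(r, s). super_hz (int (lam (Suc r)) - int r + int s) (m - 1) (\<lambda>i. x (Suc i)) n y))"
    then have i': "i < k" and j': "j < k" by auto
    have "mat_delete D 0 0 $$ (i, j) = D $$ (Suc i, Suc j)"
      using D i' j' lk by (simp add: mat_delete_def)
    also have "\<dots> = h (int (lam (Suc i)) - int (Suc i) + int (Suc j)) - t * h (int (lam (Suc i)) - int (Suc i) + int j)"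
      using i' j' lk by (simp add: Dij C_def)
    also have "\<dots> = super_hz (int (lam (Suc i)) - int i + int j) (m - 1) (\<lambda>i. x (Suc i)) n y"
      unfolding super_hz_shift[OF assms(2)] h_def t_def by (simp add: algebra_simps)
    finally show "mat_delete D 0 0 $$ (i, j) = mat k k (\<lambda>(r, s). super_hz (int (lam (Suc r)) - int r + int s) (m - 1) (\<lambda>i. x (Suc i)) n y) $$ (i, j)"
      using i' j' by simp
  qed (use D lk in auto)
  have "SP (\<lambda>i. lam (Suc i)) (m - 1) (\<lambda>i. x (Suc i)) n y = det (mat_delete D 0 0)"
    unfolding SP_def delD part_length_shift[OF assms(3)] l_def[symmetric] lk by simp
  also have "\<dots> = (\<Sum>s<l. t ^ s * cofactor B 0 s)" using detD detD2 detC by simp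
  finally show ?thesis by (simp add: l_def t_def B_def)
qed


lemma det_mat0: "det (mat 0 0 f) = (1::'a::comm_ring_1)"
proof -
  have "mat 0 0 f = (1\<^sub>m 0 :: 'a mat)" by (rule eq_matI) auto
  then show ?thesis by simp
qed

lemma SP_len0: "part_length lam = 0 \<Longrightarrow> SP lam m x n y = 1"
  by (simp add: SP_def det_mat0)

lemma JT_perm: "p permutes {..<m} \<Longrightarrow> q permutes {..<n} \<Longrightarrow> JT lam m (x \<circ> p) n (y \<circ> q) = JT lam m x n y"
  by (simp add: JT_def super_hz_perm)

lemma SP_perm: "p permutes {..<m} \<Longrightarrow> q permutes {..<n} \<Longrightarrow> SP lam m (x \<circ> p) n (y \<circ> q) = SP lam m x n y"
  by (simp add: SP_JT JT_perm)

definition KL :: "(nat \<Rightarrow> nat) \<Rightarrow> nat" where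
  "KL lam = (if part_length lam = 0 then 1 else part_length lam)"
definition Kc :: "(nat \<Rightarrow> nat) \<Rightarrow> nat \<Rightarrow> (nat \<Rightarrow> 'a::field) \<Rightarrow> nat \<Rightarrow> (nat \<Rightarrow> 'a) \<Rightarrow> nat \<Rightarrow> 'a" where
  "Kc lam m x n y s = (if part_length lam = 0 then 1 else cofactor (JT lam m x n y) 0 s)"

lemma keyA:
  fixes x y :: "nat \<Rightarrow> 'a::field"
  assumes "m \<ge> 1" "is_partition lam" "p permutes {..<m}" "q permutes {..<n}"
  shows "SP (\<lambda>i. lam (Suc i)) (m - 1) (\<lambda>i. (x \<circ> p) (Suc i)) n (y \<circ> q) = (\<Sum>s<KL lam. x (p 0) ^ s * Kc lam m x n y s)"
proof (cases "part_length lam = 0")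
  case True
  then have l0: "part_length (\<lambda>i. lam (Suc i)) = 0" using part_length_shift[OF assms(2)] by simp
  show ?thesis using SP_len0[OF l0] True by (simp add: KL_def Kc_def)
next
  case False
  then have l: "part_length lam \<ge> 1" by simp
  show ?thesis
    using SP_shift[OF l assms(1) assms(2), of "x \<circ> p" n "y \<circ> q"] False
    by (simp add: JT_perm[OF assms(3,4)] KL_def Kc_def)
qed

lemma keyB:
  fixes x y :: "nat \<Rightarrow> 'a::field"
  assumes "m \<ge> 1" "is_partition lam"
  shows "SP lam m x n y = (\<Sum>s<KL lam. super_hz (int (lam 0) + int s) m x n y * Kc lam m x n y s)"
proof (cases "part_length lam = 0")
  case True
  have "lam 0 = 0" using partition_nonzero[OF assms(2)] True by auto
  then show ?thesis using SP_len0[OF True] True by (simp add: KL_def Kc_def super_hz_def super_h_EP)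
next
  case False
  then have l: "part_length lam \<ge> 1" by simp
  show ?thesis using SP_laplace[OF l] False by (simp add: KL_def Kc_def)
qed

lemma altR_unit: "altR (x::nat \<Rightarrow> 'a::field) m = (\<Sum>p\<in>{p. p permutes {..<m}}. of_int (sign p) * (\<Prod>i<m. x (p i) ^ (m - 1 - i)))"
  by (simp add: altR_def)

theorem lemma2p2:
  fixes lam :: "nat \<Rightarrow> nat" and m n :: nat and x y :: "nat \<Rightarrow> 'a::field"
  assumes "m \<ge> 1"
    and "is_partition lam"
    and "int (lam 0) + (int m - int n) - 1 \<ge> 0"
  shows "antisymmetrize m n
           (\<lambda>x y. SP lam m x n y * (\<Prod>i<m. x i ^ (m - 1 - i)) * (\<Prod>j<n. y j ^ (n - 1 - j))) x y
       = antisymmetrize m n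
           (\<lambda>x y. (\<Prod>j<n. (x 0 - y j)) * x 0 ^ nat (int (lam 0) + (int m - int n) - 1)
                  * SP (\<lambda>i. lam (Suc i)) (m - 1) (\<lambda>i. x (Suc i)) n y
                  * (\<Prod>i\<in>{1..<m}. x i ^ (m - 1 - i)) * (\<Prod>j<n. y j ^ (n - 1 - j))) x y"
proof -
  define L where "L = KL lam"
  define c where "c = Kc lam m x n y"
  have A: "\<And>p q. p permutes {..<m} \<Longrightarrow> q permutes {..<n} \<Longrightarrow>
       SP (\<lambda>i. lam (Suc i)) (m - 1) (\<lambda>i. (x \<circ> p) (Suc i)) n (y \<circ> q) = (\<Sum>s<L. x (p 0) ^ s * c s)"
    unfolding L_def c_def by (rule keyA[OF assms(1,2)])
  have B: "SP lam m x n y = (\<Sum>s<L. super_hz (int (lam 0) + int s) m x n y * c s)"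
    unfolding L_def c_def by (rule keyB[OF assms(1,2)])
  define c' where "c' = nat (int (lam 0) + (int m - int n) - 1)"
  let ?P = "{p. p permutes {..<m}}" and ?Q = "{q. q permutes {..<n}}"
  define G where "G = (\<lambda>N. antisymmetrize m n (\<lambda>x y. (\<Prod>j<n. (x 0 - y j)) * x 0 ^ N * (\<Prod>i\<in>{1..<m}. x i ^ (m - 1 - i)) * (\<Prod>j<n. y j ^ (n - 1 - j))) x y)"
  define T where "T = (\<lambda>N (p::nat\<Rightarrow>nat) (q::nat\<Rightarrow>nat). of_int (sign p * sign q) * ((\<Prod>j<n. (x (p 0) - y (q j))) * x (p 0) ^ N * (\<Prod>i\<in>{1..<m}. x (p i) ^ (m - 1 - i)) * (\<Prod>j<n. y (q j) ^ (n - 1 - j))))"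
  have GT: "\<And>N. G N = (\<Sum>p\<in>?P. \<Sum>q\<in>?Q. T N p q)"
    by (simp add: G_def T_def antisymmetrize_def)
  have lhs: "antisymmetrize m n
           (\<lambda>x y. SP lam m x n y * (\<Prod>i<m. x i ^ (m - 1 - i)) * (\<Prod>j<n. y j ^ (n - 1 - j))) x y
         = SP lam m x n y * (altR x m * altR y n)"
  proof -
    have "antisymmetrize m n
           (\<lambda>x y. SP lam m x n y * (\<Prod>i<m. x i ^ (m - 1 - i)) * (\<Prod>j<n. y j ^ (n - 1 - j))) x y
        = (\<Sum>p\<in>?P. \<Sum>q\<in>?Q. SP lam m x n y * ((of_int (sign p) * (\<Prod>i<m. x (p i) ^ (m - 1 - i))) * (of_int (sign q) * (\<Prod>j<n. y (q j) ^ (n - 1 - j)))))"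
      unfolding antisymmetrize_def
      by (intro sum.cong refl) (simp add: SP_perm[unfolded comp_def] o_def algebra_simps)
    also have "\<dots> = SP lam m x n y * (altR x m * altR y n)"
      by (simp only: altR_def sum_product, simp only: sum_distrib_left mult.assoc)
    finally show ?thesis .
  qed
  have rhs: "antisymmetrize m n
           (\<lambda>x y. (\<Prod>j<n. (x 0 - y j)) * x 0 ^ nat (int (lam 0) + (int m - int n) - 1)
                  * SP (\<lambda>i. lam (Suc i)) (m - 1) (\<lambda>i. x (Suc i)) n y
                  * (\<Prod>i\<in>{1..<m}. x i ^ (m - 1 - i)) * (\<Prod>j<n. y j ^ (n - 1 - j))) x y
      = (\<Sum>s<L. c s * G (c' + s))"
  proof -
    have "antisymmetrize m n
           (\<lambda>x y. (\<Prod>j<n. (x 0 - y j)) * x 0 ^ nat (int (lam 0) + (int m - int n) - 1)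
                  * SP (\<lambda>i. lam (Suc i)) (m - 1) (\<lambda>i. x (Suc i)) n y
                  * (\<Prod>i\<in>{1..<m}. x i ^ (m - 1 - i)) * (\<Prod>j<n. y j ^ (n - 1 - j))) x y
       = (\<Sum>p\<in>?P. \<Sum>q\<in>?Q. \<Sum>s<L. c s * T (c' + s) p q)"
      unfolding antisymmetrize_def c'_def[symmetric]
    proof (intro sum.cong refl)
      fix p q assume p: "p \<in> ?P" and q: "q \<in> ?Q"
      have a: "SP (\<lambda>i. lam (Suc i)) (m - 1) (\<lambda>i. (x \<circ> p) (Suc i)) n (y \<circ> q) = (\<Sum>s<L. x (p 0) ^ s * c s)"
        using A p q by simp
      show "of_int (sign p * sign q) * ((\<Prod>j<n. ((x \<circ> p) 0 - (y \<circ> q) j)) * (x \<circ> p) 0 ^ c'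
                  * SP (\<lambda>i. lam (Suc i)) (m - 1) (\<lambda>i. (x \<circ> p) (Suc i)) n (y \<circ> q)
                  * (\<Prod>i\<in>{1..<m}. (x \<circ> p) i ^ (m - 1 - i)) * (\<Prod>j<n. (y \<circ> q) j ^ (n - 1 - j)))
          = (\<Sum>s<L. c s * T (c' + s) p q)"
        unfolding a T_def sum_distrib_left sum_distrib_right
        by (intro sum.cong refl) (simp add: power_add algebra_simps)
    qed
    also have "\<dots> = (\<Sum>p\<in>?P. \<Sum>s<L. \<Sum>q\<in>?Q. c s * T (c' + s) p q)"
      by (intro sum.cong refl) (rule sum.swap)
    also have "\<dots> = (\<Sum>s<L. \<Sum>p\<in>?P. \<Sum>q\<in>?Q. c s * T (c' + s) p q)"
      by (rule sum.swap)
    also have "\<dots> = (\<Sum>s<L. c s * G (c' + s))"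
      unfolding GT sum_distrib_left by simp
    finally show ?thesis .
  qed
  have Gc: "\<And>s. G (c' + s) = super_hz (int (lam 0) + int s) m x n y * altR x m * altR y n"
  proof -
    fix s
    have eq: "int c' + int s + int n - int m + 1 = int (lam 0) + int s"
      using assms(3) by (simp add: c'_def)
    show "G (c' + s) = super_hz (int (lam 0) + int s) m x n y * altR x m * altR y n"
      unfolding G_def using G_lemma[OF assms(1), of n "c' + s" x y] by (simp only: of_nat_add eq)
  qed
  show ?thesis
    unfolding lhs rhs Gc B sum_distrib_right
    by (intro sum.cong refl) (simp add: algebra_simps)
qed

end
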